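(* Let $\mathcal{M}$ be a metric space on $\omega$ with completion $\mathcal{C}(\mathcal{M})$, and let $\bar a,\bar b$ be tuples of elements of $\mathcal{C}(\mathcal{M})$ of the same length. For every ordinal $\alpha$ and every $f\in\mathrm{REC}$, if $\bar a\sim_\alpha\bar b$ then $\bar a\sim^f_\alpha\bar b$. Consequently $\mathrm{SR}(\bar a,\bar b)\le \mathrm{R}(\bar a,\bar b)$.
   Context: $\mathcal{C}(\mathcal{M})$ is a structure in the language $\mathscr{U}=\{\dot d_q,\dot d^q:q\in\mathbb{Q}^+\}$, $\dot d_q(x,y)\Leftrightarrow d(x,y)<q$, $\dot d^q(x,y)\Leftrightarrow d(x,y)>q$. Back-and-forth relations in $\mathcal{C}(\mathcal{M})$: $\bar a\sim_0\bar b$ iff $a_i\mapsto b_i$ is a partial $\mathscr{U}$-isomorphism; $\bar a\sim_{\alpha+1}\bar b$ iff for every $a\in\mathcal{C}(\mathcal{M})$ there is $b$ with $\bar a a\sim_\alpha\bar b b$ and conversely; at limits take intersections; $\mathrm{SR}(\bar a,\bar b)$ is the least $\mu$ with $\neg(\bar a\sim_\mu\bar b)$, or $\infty$. $\mathrm{REC}$ is the set of recursive, strictly decreasing $f:\omega\to\mathbb{Q}^+$ converging to $0$. For $f\in\mathrm{REC}$, tuples $\bar a=(a_0,\dots,a_{p-1})$, $\bar b=(b_0,\dots,b_{p-1})$ from $\mathcal{C}(\mathcal{M})$ and an ordinal $\alpha$, the game $G^{f,\bar a,\bar b}_\alpha$ is played as follows: at move $i=0,1,2,\dots$, Player 1 plays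 an ordinal $\alpha_i$ with $\alpha_0<\alpha$ and $\alpha_i<\alpha_{i-1}$ for $i>0$, together with an element of $\mathcal{M}$ (i.e. a natural number): if $i$ is even Player 1 plays $c_i\in\mathcal{M}$ and Player 2 responds with $d_i\in\mathcal{M}$; if $i$ is odd Player 1 plays $d_i\in\mathcal{M}$ and Player 2 responds with $c_i\in\mathcal{M}$. The game ends after Player 2 responds to the move at which Player 1 plays $\alpha_{k-1}=0$. Player 2 wins iff (I) for all $i<p$, $j<k$: $|d(a_i,c_j)-d(b_i,d_j)|<f(j)$, and (II) for all $i,j<k$: $|d(c_i,c_j)-d(d_i,d_j)|<f(i)+f(j)$, distances computed in $\mathcal{C}(\mathcal{M})$. $\bar a\sim^f_\alpha\bar b$ means Player 2 has a winning strategy in $G^{f,\bar a,\bar b}_\alpha$. $\mathrm{R}(\bar a,\bar b)$ is the least ordinal $\mu$ such that $\neg(\bar a\sim^f_\mu\bar b)$ for some $f\in\mathrm{REC}$, or $\infty$ if there is none. *)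

theory Defs
  imports Complex_Main "HOL-Library.Nat_Bijection"
begin

datatype recf = RZero | RSucc | RProj nat | RComp recf "recf list" | RPrim recf recf | RMu recf

inductive reval :: "recf \<Rightarrow> nat list \<Rightarrow> nat \<Rightarrow> bool" where
  rzero: "reval RZero xs 0"
| rsucc: "reval RSucc (x # xs) (Suc x)"
| rproj: "i < length xs \<Longrightarrow> reval (RProj i) xs (xs ! i)"
| rcomp: "length ys = length hs \<Longrightarrow> (\<forall>i<length hs. reval (hs ! i) xs (ys ! i))
           \<Longrightarrow> reval g ys z \<Longrightarrow> reval (RComp g hs) xs z"
| rprim0: "reval g xs z \<Longrightarrow> reval (RPrim g h) (0 # xs) z"
| rprimS: "reval (RPrim g h) (n # xs) y \<Longrightarrow> reval h (n # y # xs) z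
           \<Longrightarrow> reval (RPrim g h) (Suc n # xs) z"
| rmu: "reval g (n # xs) 0 \<Longrightarrow> (\<forall>m<n. \<exists>y. reval g (m # xs) (Suc y))
           \<Longrightarrow> reval (RMu g) xs n"

definition total_recursive :: "(nat \<Rightarrow> nat) \<Rightarrow> bool" where
  "total_recursive g \<longleftrightarrow> (\<exists>P. \<forall>n. reval P [n] (g n))"

definition rat_of_code :: "nat \<Rightarrow> rat" where
  "rat_of_code k = (case prod_decode k of (p, q) \<Rightarrow> of_nat p / of_nat (Suc q))"

definition recursive_rat_seq :: "(nat \<Rightarrow> rat) \<Rightarrow> bool" where
  "recursive_rat_seq f \<longleftrightarrow> (\<exists>g. total_recursive g \<and> (\<forall>n. f n = rat_of_code (g n)))"

definition REC :: "(nat \<Rightarrow> rat) set" where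
  "REC = {f. recursive_rat_seq f \<and> (\<forall>n. f n > 0) \<and> (\<forall>n. f (Suc n) < f n)
            \<and> (\<lambda>n. real_of_rat (f n)) \<longlonglongrightarrow> 0}"

text \<open>Partial isomorphism in the language with d_q, d^q (q positive rational), and equality.\<close>
definition pariso :: "'c::metric_space list \<Rightarrow> 'c list \<Rightarrow> bool" where
  "pariso as bs \<longleftrightarrow> length as = length bs \<and>
     (\<forall>i<length as. \<forall>j<length as.
        (as ! i = as ! j \<longleftrightarrow> bs ! i = bs ! j) \<and>
        (\<forall>q::rat. q > 0 \<longrightarrow>
           (dist (as ! i) (as ! j) < real_of_rat q \<longleftrightarrow> dist (bs ! i) (bs ! j) < real_of_rat q) \<and>
           (dist (as ! i) (as ! j) > real_of_rat q \<longleftrightarrow> dist (bs ! i) (bs ! j) > real_of_rat q)))"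

text \<open>Ordinals are rendered as elements of an arbitrary well-ordered type 'o.
  Zero = least element; successor of beta = alpha with beta < alpha and nothing in between;
  otherwise alpha is a limit.\<close>
definition bf_step :: "('o::wellorder \<Rightarrow> 'c::metric_space list \<Rightarrow> 'c list \<Rightarrow> bool)
     \<Rightarrow> 'o \<Rightarrow> 'c list \<Rightarrow> 'c list \<Rightarrow> bool" where
  "bf_step rec \<alpha> as bs =
    (if (\<forall>\<beta>. \<not> \<beta> < \<alpha>) then pariso as bs
     else if (\<exists>\<beta><\<alpha>. \<forall>\<gamma>. \<not> (\<beta> < \<gamma> \<and> \<gamma> < \<alpha>)) then
       (let \<beta> = (THE \<beta>. \<beta> < \<alpha> \<and> (\<forall>\<gamma>. \<not> (\<beta> < \<gamma> \<and> \<gamma> < \<alpha>))) in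
         (\<forall>a. \<exists>b. rec \<beta> (as @ [a]) (bs @ [b])) \<and> (\<forall>b. \<exists>a. rec \<beta> (as @ [a]) (bs @ [b])))
     else (\<forall>\<beta><\<alpha>. rec \<beta> as bs))"

definition bf :: "'o::wellorder \<Rightarrow> 'c::metric_space list \<Rightarrow> 'c list \<Rightarrow> bool" where
  "bf = wfrec {(x, y). x < y} bf_step"

text \<open>SRank: least mu with not (as ~_mu bs); None stands for infinity.\<close>
definition SRank :: "'c::metric_space list \<Rightarrow> 'c list \<Rightarrow> 'o::wellorder option" where
  "SRank as bs = (if \<exists>\<mu>::'o. \<not> bf \<mu> as bs then Some (LEAST \<mu>. \<not> bf \<mu> as bs) else None)"

text \<open>A complete sequence of Player 1 moves (ordinal, element of M):
  alpha_0 < alpha, strictly decreasing, last ordinal is 0 (the least element).\<close>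
definition p1_complete :: "'o::wellorder \<Rightarrow> ('o \<times> nat) list \<Rightarrow> bool" where
  "p1_complete \<alpha> ms \<longleftrightarrow> ms \<noteq> [] \<and> fst (ms ! 0) < \<alpha> \<and>
     (\<forall>i. Suc i < length ms \<longrightarrow> fst (ms ! Suc i) < fst (ms ! i)) \<and>
     (\<forall>\<beta>. \<not> \<beta> < fst (last ms))"

text \<open>Player 2 strategy: response to the current move given all Player 1 moves so far.\<close>
definition resp :: "(('o \<times> nat) list \<Rightarrow> nat) \<Rightarrow> ('o \<times> nat) list \<Rightarrow> nat \<Rightarrow> nat" where
  "resp \<sigma> ms i = \<sigma> (take (Suc i) ms)"

definition cseq :: "(('o \<times> nat) list \<Rightarrow> nat) \<Rightarrow> ('o \<times> nat) list \<Rightarrow> nat \<Rightarrow> nat" where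
  "cseq \<sigma> ms i = (if even i then snd (ms ! i) else resp \<sigma> ms i)"

definition dseq :: "(('o \<times> nat) list \<Rightarrow> nat) \<Rightarrow> ('o \<times> nat) list \<Rightarrow> nat \<Rightarrow> nat" where
  "dseq \<sigma> ms i = (if even i then resp \<sigma> ms i else snd (ms ! i))"

definition p2_wins :: "(nat \<Rightarrow> 'c::metric_space) \<Rightarrow> (nat \<Rightarrow> rat) \<Rightarrow> 'c list \<Rightarrow> 'c list
     \<Rightarrow> nat \<Rightarrow> (nat \<Rightarrow> nat) \<Rightarrow> (nat \<Rightarrow> nat) \<Rightarrow> bool" where
  "p2_wins e f as bs k c d \<longleftrightarrow>
     (\<forall>i<length as. \<forall>j<k. \<bar>dist (as ! i) (e (c j)) - dist (bs ! i) (e (d j))\<bar> < real_of_rat (f j)) \<and>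
     (\<forall>i<k. \<forall>j<k. \<bar>dist (e (c i)) (e (c j)) - dist (e (d i)) (e (d j))\<bar>
                     < real_of_rat (f i) + real_of_rat (f j))"

definition simf :: "(nat \<Rightarrow> 'c::metric_space) \<Rightarrow> (nat \<Rightarrow> rat) \<Rightarrow> 'o::wellorder \<Rightarrow> 'c list \<Rightarrow> 'c list \<Rightarrow> bool" where
  "simf e f \<alpha> as bs \<longleftrightarrow> (\<exists>\<sigma> :: ('o \<times> nat) list \<Rightarrow> nat. \<forall>ms. p1_complete \<alpha> ms \<longrightarrow>
       p2_wins e f as bs (length ms) (cseq \<sigma> ms) (dseq \<sigma> ms))"

definition RRank :: "(nat \<Rightarrow> 'c::metric_space) \<Rightarrow> 'c list \<Rightarrow> 'c list \<Rightarrow> 'o::wellorder option" where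
  "RRank e as bs = (if \<exists>\<mu>::'o. \<exists>f\<in>REC. \<not> simf e f \<mu> as bs
                  then Some (LEAST \<mu>. \<exists>f\<in>REC. \<not> simf e f \<mu> as bs) else None)"

definition le_inf :: "'o::linorder option \<Rightarrow> 'o option \<Rightarrow> bool" where
  "le_inf x y = (case y of None \<Rightarrow> True | Some m \<Rightarrow> (case x of None \<Rightarrow> False | Some n \<Rightarrow> n \<le> m))"

end

theory Submission
  imports Defs
begin

lemma the_pred:
  fixes \<alpha> \<beta> :: "'o::wellorder"
  assumes "\<beta> < \<alpha>" "\<forall>\<gamma>. \<not> (\<beta> < \<gamma> \<and> \<gamma> < \<alpha>)"
  shows "(THE \<beta>. \<beta> < \<alpha> \<and> (\<forall>\<gamma>. \<not> (\<beta> < \<gamma> \<and> \<gamma> < \<alpha>))) = \<beta>"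
proof (rule the_equality)
  show "\<beta> < \<alpha> \<and> (\<forall>\<gamma>. \<not> (\<beta> < \<gamma> \<and> \<gamma> < \<alpha>))" using assms by blast
next
  fix b assume "b < \<alpha> \<and> (\<forall>\<gamma>. \<not> (b < \<gamma> \<and> \<gamma> < \<alpha>))"
  then show "b = \<beta>" using assms by (metis linorder_neqE)
qed

lemma bf_unfold: "bf = bf_step bf"
proof -
  have "adm_wf {(x::'o::wellorder, y). x < y} (bf_step :: _ \<Rightarrow> _ \<Rightarrow> 'c::metric_space list \<Rightarrow> _)"
    unfolding adm_wf_def
  proof (intro allI impI)
    fix f g :: "'o \<Rightarrow> 'c list \<Rightarrow> 'c list \<Rightarrow> bool" and x :: 'o
    assume H: "\<forall>z. (z, x) \<in> {(x, y). x < y} \<longrightarrow> f z = g z"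
    show "bf_step f x = bf_step g x"
    proof (intro ext)
      fix as bs :: "'c list"
      show "bf_step f x as bs = bf_step g x as bs"
      proof (cases "\<exists>\<beta><x. \<forall>\<gamma>. \<not> (\<beta> < \<gamma> \<and> \<gamma> < x)")
        case True
        then obtain \<beta> where b: "\<beta> < x" "\<forall>\<gamma>. \<not> (\<beta> < \<gamma> \<and> \<gamma> < x)" by blast
        have "f \<beta> = g \<beta>" using H b by auto
        then show ?thesis unfolding bf_step_def using the_pred[OF b] True by (simp add: Let_def)
      next
        case False
        then show ?thesis unfolding bf_step_def using H by auto
      qed
    qed
  qed
  then show ?thesis unfolding bf_def by (rule wfrec_fixpoint[OF wf])
qed

lemma bf_eq: "bf \<alpha> as bs = bf_step bf \<alpha> as bs"
  by (metis bf_unfold)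

lemma bf_zero: "\<forall>\<beta>. \<not> \<beta> < \<alpha> \<Longrightarrow> bf \<alpha> as bs = pariso as bs"
  unfolding bf_eq[of \<alpha>] bf_step_def by simp

definition ext2 :: "'o::wellorder \<Rightarrow> 'c::metric_space list \<Rightarrow> 'c list \<Rightarrow> bool" where
  "ext2 \<beta> as bs \<longleftrightarrow> (\<forall>a. \<exists>b. bf \<beta> (as @ [a]) (bs @ [b])) \<and> (\<forall>b. \<exists>a. bf \<beta> (as @ [a]) (bs @ [b]))"

lemma bf_succ:
  assumes "\<beta> < \<alpha>" "\<forall>\<gamma>. \<not> (\<beta> < \<gamma> \<and> \<gamma> < \<alpha>)"
  shows "bf \<alpha> as bs = ext2 \<beta> as bs"
proof -
  have 1: "\<not>(\<forall>\<beta>. \<not> \<beta> < \<alpha>)" using assms by blast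
  have 2: "\<exists>\<beta><\<alpha>. \<forall>\<gamma>. \<not> (\<beta> < \<gamma> \<and> \<gamma> < \<alpha>)" using assms by blast
  show ?thesis unfolding bf_eq[of \<alpha>] bf_step_def if_not_P[OF 1] if_P[OF 2] the_pred[OF assms] Let_def ext2_def ..
qed

lemma bf_lim:
  assumes "\<beta>0 < \<alpha>" "\<not> (\<exists>\<beta><\<alpha>. \<forall>\<gamma>. \<not> (\<beta> < \<gamma> \<and> \<gamma> < \<alpha>))"
  shows "bf \<alpha> as bs = (\<forall>\<beta><\<alpha>. bf \<beta> as bs)"
proof -
  have 1: "\<not>(\<forall>\<beta>. \<not> \<beta> < \<alpha>)" using assms by blast
  show ?thesis unfolding bf_eq[of \<alpha>] bf_step_def if_not_P[OF 1] if_not_P[OF assms(2)] ..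
qed


lemma pariso_reindex:
  assumes "pariso as bs" "\<forall>i\<in>set h. i < length as"
  shows "pariso (map ((!) as) h) (map ((!) bs) h)"
  using assms unfolding pariso_def by auto

lemma bf_reindex:
  fixes \<alpha> :: "'o::wellorder" and as bs :: "'c::metric_space list"
  shows "length as = length bs \<Longrightarrow> \<forall>i\<in>set h. i < length as \<Longrightarrow> bf \<alpha> as bs
    \<Longrightarrow> bf \<alpha> (map ((!) as) h) (map ((!) bs) h)"
proof (induction \<alpha> arbitrary: as bs h rule: less_induct)
  case (less \<alpha>)
  show ?case
  proof (cases "\<forall>\<beta>. \<not> \<beta> < \<alpha>")
    case True
    then show ?thesis using less.prems pariso_reindex bf_zero by metis
  next
    case nz: False
    show ?thesis
    proof (cases "\<exists>\<beta><\<alpha>. \<forall>\<gamma>. \<not> (\<beta> < \<gamma> \<and> \<gamma> < \<alpha>)")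
      case True
      then obtain \<beta> where b: "\<beta> < \<alpha>" "\<forall>\<gamma>. \<not> (\<beta> < \<gamma> \<and> \<gamma> < \<alpha>)" by blast
      have E: "ext2 \<beta> as bs" using less.prems bf_succ[OF b] by blast
      have M: "map ((!) (xs @ [x])) (h @ [length as]) = map ((!) xs) h @ [x]"
        if "length xs = length as" for xs and x :: 'c
        using less.prems(2) that by (auto simp: nth_append)
      have "ext2 \<beta> (map ((!) as) h) (map ((!) bs) h)"
        unfolding ext2_def
      proof (intro conjI allI)
        fix a
        obtain b where "bf \<beta> (as @ [a]) (bs @ [b])" using E unfolding ext2_def by blast
        moreover have "\<forall>i\<in>set (h @ [length as]). i < length (as @ [a])" using less.prems(2) by auto
        moreover have "length (as @ [a]) = length (bs @ [b])" using less.prems(1) by simp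
        ultimately have "bf \<beta> (map ((!) (as @ [a])) (h @ [length as])) (map ((!) (bs @ [b])) (h @ [length as]))"
          using less.IH[OF b(1)] by blast
        moreover have "map ((!) (as @ [a])) (h @ [length as]) = map ((!) as) h @ [a]" using M[of as a] by simp
        moreover have "map ((!) (bs @ [b])) (h @ [length as]) = map ((!) bs) h @ [b]" using M[of bs b] less.prems(1) by simp
        ultimately have "bf \<beta> (map ((!) as) h @ [a]) (map ((!) bs) h @ [b])"
          by (simp only:)
        then show "\<exists>b. bf \<beta> (map ((!) as) h @ [a]) (map ((!) bs) h @ [b])"
          by blast
      next
        fix b
        obtain a where "bf \<beta> (as @ [a]) (bs @ [b])" using E unfolding ext2_def by blast
        moreover have "\<forall>i\<in>set (h @ [length as]). i < length (as @ [a])" using less.prems(2) by auto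
        moreover have "length (as @ [a]) = length (bs @ [b])" using less.prems(1) by simp
        ultimately have "bf \<beta> (map ((!) (as @ [a])) (h @ [length as])) (map ((!) (bs @ [b])) (h @ [length as]))"
          using less.IH[OF b(1)] by blast
        moreover have "map ((!) (as @ [a])) (h @ [length as]) = map ((!) as) h @ [a]" using M[of as a] by simp
        moreover have "map ((!) (bs @ [b])) (h @ [length as]) = map ((!) bs) h @ [b]" using M[of bs b] less.prems(1) by simp
        ultimately have "bf \<beta> (map ((!) as) h @ [a]) (map ((!) bs) h @ [b])"
          by (simp only:)
        then show "\<exists>a. bf \<beta> (map ((!) as) h @ [a]) (map ((!) bs) h @ [b])"
          by blast
      qed
      then show ?thesis using bf_succ[OF b] by blast
    next
      case False
      then obtain \<beta>0 where b0: "\<beta>0 < \<alpha>" using nz by blast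
      show ?thesis using less.prems less.IH unfolding bf_lim[OF b0 False] by blast
    qed
  qed
qed

lemma bf_prefix:
  assumes "length as = length bs" "bf \<alpha> (as @ [a]) (bs @ [b])"
  shows "bf \<alpha> as bs"
proof -
  have "bf \<alpha> (map ((!) (as @ [a])) [0..<length as]) (map ((!) (bs @ [b])) [0..<length as])"
    using bf_reindex[OF _ _ assms(2)] assms(1) by auto
  moreover have "map ((!) (as @ [a])) [0..<length as] = as"
    by (rule nth_equalityI) (auto simp: nth_append)
  moreover have "map ((!) (bs @ [b])) [0..<length as] = bs"
    using assms(1) by (intro nth_equalityI) (auto simp: nth_append)
  ultimately show ?thesis by simp
qed


lemma ext2_bf:
  assumes "length as = length bs" "ext2 \<beta> as bs"
  shows "bf \<beta> as bs"
proof -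
  obtain b where "bf \<beta> (as @ [undefined]) (bs @ [b])" using assms(2) unfolding ext2_def by blast
  then show ?thesis using bf_prefix assms(1) by blast
qed

lemma bf_ext:
  fixes \<alpha> :: "'o::wellorder" and as bs :: "'c::metric_space list"
  shows "\<beta> < \<alpha> \<Longrightarrow> length as = length bs \<Longrightarrow> bf \<alpha> as bs \<Longrightarrow> ext2 \<beta> as bs"
proof (induction \<alpha> arbitrary: \<beta> as bs rule: less_induct)
  case (less \<alpha>)
  show ?case
  proof (cases "\<exists>\<gamma><\<alpha>. \<forall>\<delta>. \<not> (\<gamma> < \<delta> \<and> \<delta> < \<alpha>)")
    case True
    then obtain \<gamma> where g: "\<gamma> < \<alpha>" "\<forall>\<delta>. \<not> (\<gamma> < \<delta> \<and> \<delta> < \<alpha>)" by blast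
    have E: "ext2 \<gamma> as bs" using less.prems bf_succ[OF g] by blast
    show ?thesis
    proof (cases "\<beta> = \<gamma>")
      case True then show ?thesis using E by simp
    next
      case False
      then have bg: "\<beta> < \<gamma>" using g less.prems(1) by (metis linorder_neqE)
      have *: "bf \<beta> (as @ [a]) (bs @ [b])" if "bf \<gamma> (as @ [a]) (bs @ [b])" for a b
      proof -
        have "length (as @ [a]) = length (bs @ [b])" using less.prems(2) by simp
        then have "ext2 \<beta> (as @ [a]) (bs @ [b])" using less.IH[OF g(1) bg] that by blast
        then show ?thesis using ext2_bf \<open>length (as @ [a]) = length (bs @ [b])\<close> by blast
      qed
      show ?thesis using E * unfolding ext2_def by meson
    qed
  next
    case False
    obtain \<gamma> where g: "\<beta> < \<gamma>" "\<gamma> < \<alpha>" using False less.prems(1) by blast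
    have "bf \<gamma> as bs" using less.prems bf_lim[OF less.prems(1) False] g by blast
    then show ?thesis using less.IH[OF g(2) g(1)] less.prems(2) by blast
  qed
qed

lemma pariso_dist:
  assumes "pariso L M" "i < length L" "j < length L"
  shows "dist (L ! i) (L ! j) = dist (M ! i) (M ! j)"
proof (rule ccontr)
  assume ne: "dist (L ! i) (L ! j) \<noteq> dist (M ! i) (M ! j)"
  have P: "\<And>q::rat. q > 0 \<Longrightarrow> (dist (L ! i) (L ! j) < real_of_rat q \<longleftrightarrow> dist (M ! i) (M ! j) < real_of_rat q)"
    using assms unfolding pariso_def by blast
  show False
  proof (cases "dist (L ! i) (L ! j) < dist (M ! i) (M ! j)")
    case True
    then obtain q where q: "dist (L ! i) (L ! j) < of_rat q" "of_rat q < dist (M ! i) (M ! j)"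
      using of_rat_dense by blast
    have "q > 0" using q(1) zero_le_dist[of "L ! i" "L ! j"] by (metis le_less_trans zero_less_of_rat_iff)
    then show False using P q by fastforce
  next
    case False
    then have lt: "dist (M ! i) (M ! j) < dist (L ! i) (L ! j)" using ne by simp
    then obtain q where q: "dist (M ! i) (M ! j) < of_rat q" "of_rat q < dist (L ! i) (L ! j)"
      using of_rat_dense by blast
    have "q > 0" using q(1) zero_le_dist[of "M ! i" "M ! j"] by (metis le_less_trans zero_less_of_rat_iff)
    then show False using P q by fastforce
  qed
qed


definition nxt :: "(nat \<Rightarrow> 'c::metric_space) \<Rightarrow> 'c list \<Rightarrow> 'c list \<Rightarrow> 'o::wellorder \<Rightarrow> nat \<Rightarrow> nat
    \<Rightarrow> 'c list \<times> 'c list \<Rightarrow> 'c list \<times> 'c list" where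
  "nxt e as bs \<beta> m j XY = (if even j
     then (fst XY @ [e m], snd XY @ [SOME y. bf \<beta> (as @ fst XY @ [e m]) (bs @ snd XY @ [y])])
     else (fst XY @ [SOME x. bf \<beta> (as @ fst XY @ [x]) (bs @ snd XY @ [e m])], snd XY @ [e m]))"

primrec pts :: "(nat \<Rightarrow> 'c::metric_space) \<Rightarrow> 'c list \<Rightarrow> 'c list \<Rightarrow> ('o::wellorder \<times> nat) list \<Rightarrow> nat
    \<Rightarrow> 'c list \<times> 'c list" where
  "pts e as bs ms 0 = ([], [])"
| "pts e as bs ms (Suc j) = nxt e as bs (fst (ms ! j)) (snd (ms ! j)) j (pts e as bs ms j)"

definition strat :: "(nat \<Rightarrow> 'c::metric_space) \<Rightarrow> (nat \<Rightarrow> rat) \<Rightarrow> 'c list \<Rightarrow> 'c list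
    \<Rightarrow> ('o::wellorder \<times> nat) list \<Rightarrow> nat" where
  "strat e f as bs ms' = (let j = length ms' - 1; XY = pts e as bs ms' (length ms') in
     if even j then (SOME n. dist (e n) (last (snd XY)) < real_of_rat (f j))
     else (SOME n. dist (e n) (last (fst XY)) < real_of_rat (f j)))"

definition xp :: "(nat \<Rightarrow> 'c::metric_space) \<Rightarrow> 'c list \<Rightarrow> 'c list \<Rightarrow> ('o::wellorder \<times> nat) list \<Rightarrow> nat \<Rightarrow> 'c" where
  "xp e as bs ms i = fst (pts e as bs ms (Suc i)) ! i"

definition yp :: "(nat \<Rightarrow> 'c::metric_space) \<Rightarrow> 'c list \<Rightarrow> 'c list \<Rightarrow> ('o::wellorder \<times> nat) list \<Rightarrow> nat \<Rightarrow> 'c" where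
  "yp e as bs ms i = snd (pts e as bs ms (Suc i)) ! i"

lemma pts_len: "length (fst (pts e as bs ms j)) = j \<and> length (snd (pts e as bs ms j)) = j"
  by (induction j) (auto simp: nxt_def)

lemma pts_take: "j \<le> n \<Longrightarrow> pts e as bs (take n ms) j = pts e as bs ms j"
  by (induction j) auto

lemma pts_map: "fst (pts e as bs ms n) = map (xp e as bs ms) [0..<n] \<and>
                snd (pts e as bs ms n) = map (yp e as bs ms) [0..<n]"
proof (induction n)
  case 0 then show ?case by simp
next
  case (Suc n)
  have l: "length (fst (pts e as bs ms n)) = n" "length (snd (pts e as bs ms n)) = n" using pts_len by blast+
  have "xp e as bs ms n = last (fst (pts e as bs ms (Suc n)))"
       "yp e as bs ms n = last (snd (pts e as bs ms (Suc n)))"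
    unfolding xp_def yp_def using l by (auto simp: nxt_def nth_append)
  moreover have "fst (pts e as bs ms (Suc n)) = fst (pts e as bs ms n) @ [last (fst (pts e as bs ms (Suc n)))]"
       "snd (pts e as bs ms (Suc n)) = snd (pts e as bs ms n) @ [last (snd (pts e as bs ms (Suc n)))]"
    by (auto simp: nxt_def)
  ultimately show ?case using Suc.IH by simp
qed

lemma xp_last: "xp e as bs ms j = last (fst (pts e as bs ms (Suc j)))"
  unfolding xp_def using pts_len[of e as bs ms j] by (auto simp: nxt_def nth_append)

lemma yp_last: "yp e as bs ms j = last (snd (pts e as bs ms (Suc j)))"
  unfolding yp_def using pts_len[of e as bs ms j] by (auto simp: nxt_def nth_append)

lemma approx:
  fixes e :: "nat \<Rightarrow> 'c::metric_space" and ms :: "('o::wellorder \<times> nat) list"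
  assumes dense: "\<forall>x. \<forall>\<epsilon>>0. \<exists>n. dist (e n) x < \<epsilon>" and fpos: "\<forall>n. f n > 0" and j: "j < length ms"
  shows "dist (e (cseq (strat e f as bs) ms j)) (xp e as bs ms j)
       + dist (e (dseq (strat e f as bs) ms j)) (yp e as bs ms j) < real_of_rat (f j)"
proof -
  have fj: "real_of_rat (f j) > 0" using fpos by simp
  have tk: "length (take (Suc j) ms) = Suc j" using j by simp
  have R: "resp (strat e f as bs) ms j = (if even j
      then (SOME n. dist (e n) (yp e as bs ms j) < real_of_rat (f j))
      else (SOME n. dist (e n) (xp e as bs ms j) < real_of_rat (f j)))"
    unfolding resp_def strat_def Let_def tk xp_last yp_last using pts_take[of "Suc j" "Suc j" e as bs ms] by simp
  have S: "dist (e (SOME n. dist (e n) x < real_of_rat (f j))) x < real_of_rat (f j)" for x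
    using dense fj by (meson someI_ex)
  show ?thesis
  proof (cases "even j")
    case True
    have "xp e as bs ms j = e (snd (ms ! j))" unfolding xp_last using True by (simp add: nxt_def)
    then show ?thesis using True S unfolding cseq_def dseq_def R by simp
  next
    case False
    have "yp e as bs ms j = e (snd (ms ! j))" unfolding yp_last using False by (simp add: nxt_def)
    then show ?thesis using False S unfolding cseq_def dseq_def R by simp
  qed
qed


lemma nxt_step:
  fixes \<beta> \<gamma> :: "'o::wellorder" and e :: "nat \<Rightarrow> 'c::metric_space"
  assumes "bf \<gamma> (as @ fst XY) (bs @ snd XY)" "\<beta> < \<gamma>" "length as = length bs"
    "length (fst XY) = length (snd XY)"
  shows "bf \<beta> (as @ fst (nxt e as bs \<beta> m j XY)) (bs @ snd (nxt e as bs \<beta> m j XY))"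
proof -
  have "ext2 \<beta> (as @ fst XY) (bs @ snd XY)" using bf_ext[OF assms(2) _ assms(1)] assms(3,4) by simp
  then have A: "\<exists>y. bf \<beta> (as @ fst XY @ [a]) (bs @ snd XY @ [y])"
        and B: "\<exists>x. bf \<beta> (as @ fst XY @ [x]) (bs @ snd XY @ [b])" for a b
    unfolding ext2_def by auto
  show ?thesis
  proof (cases "even j")
    case True
    then show ?thesis unfolding nxt_def using someI_ex[OF A[of "e m"]] by simp
  next
    case False
    then show ?thesis unfolding nxt_def using someI_ex[OF B[of "e m"]] by simp
  qed
qed

lemma invariant:
  fixes \<alpha> :: "'o::wellorder" and e :: "nat \<Rightarrow> 'c::metric_space"
  assumes "p1_complete \<alpha> ms" "bf \<alpha> as bs" "length as = length bs"
  shows "j < length ms \<Longrightarrow> bf (fst (ms ! j)) (as @ fst (pts e as bs ms (Suc j))) (bs @ snd (pts e as bs ms (Suc j)))"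
proof (induction j)
  case 0
  have "fst (ms ! 0) < \<alpha>" using assms(1) unfolding p1_complete_def by blast
  then show ?case using nxt_step[of \<alpha> as "([],[])" bs] assms(2,3) by simp
next
  case (Suc j)
  have "fst (ms ! Suc j) < fst (ms ! j)" using assms(1) Suc.prems unfolding p1_complete_def by blast
  moreover have "j < length ms" using Suc.prems by simp
  ultimately have "bf (fst (ms ! Suc j)) (as @ fst (nxt e as bs (fst (ms ! Suc j)) (snd (ms ! Suc j)) (Suc j) (pts e as bs ms (Suc j))))
     (bs @ snd (nxt e as bs (fst (ms ! Suc j)) (snd (ms ! Suc j)) (Suc j) (pts e as bs ms (Suc j))))"
    using nxt_step[OF Suc.IH _ assms(3)] pts_len by metis
  then show ?case by (simp only: pts.simps)
qed

lemma dist_approx: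
  fixes u1 u2 v1 v2 x1 x2 y1 y2 :: "'c::metric_space"
  shows "\<bar>dist u1 u2 - dist v1 v2\<bar> \<le> \<bar>dist x1 x2 - dist y1 y2\<bar> + (dist u1 x1 + dist v1 y1) + (dist u2 x2 + dist v2 y2)"
proof -
  have "dist u1 u2 \<le> dist u1 x1 + dist x1 x2 + dist x2 u2"
    by (metis add.commute add_le_cancel_left dist_triangle order.trans)
  moreover have "dist x1 x2 \<le> dist x1 u1 + dist u1 u2 + dist u2 x2"
    by (metis add.commute add_le_cancel_left dist_triangle order.trans)
  moreover have "dist v1 v2 \<le> dist v1 y1 + dist y1 y2 + dist y2 v2"
    by (metis add.commute add_le_cancel_left dist_triangle order.trans)
  moreover have "dist y1 y2 \<le> dist y1 v1 + dist v1 v2 + dist v2 y2"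
    by (metis add.commute add_le_cancel_left dist_triangle order.trans)
  ultimately show ?thesis by (simp add: dist_commute abs_le_iff abs_if)
qed


lemma part1:
  fixes e :: "nat \<Rightarrow> 'c::metric_space" and as bs :: "'c list" and \<alpha> :: "'o::wellorder"
  assumes dense: "\<forall>x. \<forall>\<epsilon>>0. \<exists>n. dist (e n) x < \<epsilon>"
    and len: "length as = length bs" and fR: "f \<in> REC" and bfa: "bf \<alpha> as bs"
  shows "simf e f \<alpha> as bs"
  unfolding simf_def
proof (intro exI allI impI)
  fix ms :: "('o \<times> nat) list"
  assume pc: "p1_complete \<alpha> ms"
  let ?\<sigma> = "strat e f as bs"
  define k where "k = length ms"
  have fpos: "\<forall>n. f n > 0" using fR unfolding REC_def by blast
  have k0: "k > 0" using pc unfolding p1_complete_def k_def by simp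
  have lastms: "ms ! (k - 1) = last ms" using k0 unfolding k_def by (simp add: last_conv_nth)
  have kl: "k - 1 < length ms" using k0 unfolding k_def by simp
  have kk: "Suc (k - 1) = k" using k0 by simp
  have "bf (fst (ms ! (k - 1))) (as @ fst (pts e as bs ms (Suc (k - 1)))) (bs @ snd (pts e as bs ms (Suc (k - 1))))"
    by (rule invariant[OF pc bfa len kl])
  then have B: "bf (fst (ms ! (k - 1))) (as @ fst (pts e as bs ms k)) (bs @ snd (pts e as bs ms k))"
    by (simp only: kk)
  have "\<forall>\<beta>. \<not> \<beta> < fst (ms ! (k - 1))" using pc lastms unfolding p1_complete_def by simp
  then have "pariso (as @ fst (pts e as bs ms k)) (bs @ snd (pts e as bs ms k))"
    using B bf_zero by blast
  then have P: "pariso (as @ map (xp e as bs ms) [0..<k]) (bs @ map (yp e as bs ms) [0..<k])"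
    using pts_map[of e as bs ms k] by simp
  have A: "dist (e (cseq ?\<sigma> ms j)) (xp e as bs ms j) + dist (e (dseq ?\<sigma> ms j)) (yp e as bs ms j) < real_of_rat (f j)"
    if "j < k" for j using approx[OF dense fpos] that unfolding k_def by blast
  have D: "dist (L ! i) (L ! j) = dist (M ! i) (M ! j)"
    if "i < length L" "j < length L" "L = as @ map (xp e as bs ms) [0..<k]" "M = bs @ map (yp e as bs ms) [0..<k]" for L M i j
    using pariso_dist[OF P] that by simp
  have D1: "dist (as ! i) (xp e as bs ms j) = dist (bs ! i) (yp e as bs ms j)" if "i < length as" "j < k" for i j
    using D[OF _ _ refl refl, of i "length as + j"] that len by (simp add: nth_append)
  have D2: "dist (xp e as bs ms i) (xp e as bs ms j) = dist (yp e as bs ms i) (yp e as bs ms j)" if "i < k" "j < k" for i j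
    using D[OF _ _ refl refl, of "length as + i" "length as + j"] that len by (simp add: nth_append)
  show "p2_wins e f as bs (length ms) (cseq ?\<sigma> ms) (dseq ?\<sigma> ms)"
    unfolding p2_wins_def k_def[symmetric]
  proof (intro conjI allI impI)
    fix i j assume ij: "i < length as" "j < k"
    have "\<bar>dist (as ! i) (e (cseq ?\<sigma> ms j)) - dist (bs ! i) (e (dseq ?\<sigma> ms j))\<bar>
      \<le> \<bar>dist (as ! i) (xp e as bs ms j) - dist (bs ! i) (yp e as bs ms j)\<bar>
         + (dist (as ! i) (as ! i) + dist (bs ! i) (bs ! i))
         + (dist (e (cseq ?\<sigma> ms j)) (xp e as bs ms j) + dist (e (dseq ?\<sigma> ms j)) (yp e as bs ms j))"
      by (rule dist_approx)
    moreover have "\<bar>dist (as ! i) (xp e as bs ms j) - dist (bs ! i) (yp e as bs ms j)\<bar> = 0" using D1[OF ij] by simp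
    ultimately show "\<bar>dist (as ! i) (e (cseq ?\<sigma> ms j)) - dist (bs ! i) (e (dseq ?\<sigma> ms j))\<bar> < real_of_rat (f j)"
        using A[OF ij(2)] by simp
  next
    fix i j assume ij: "i < k" "j < k"
    have "\<bar>dist (e (cseq ?\<sigma> ms i)) (e (cseq ?\<sigma> ms j)) - dist (e (dseq ?\<sigma> ms i)) (e (dseq ?\<sigma> ms j))\<bar>
      \<le> \<bar>dist (xp e as bs ms i) (xp e as bs ms j) - dist (yp e as bs ms i) (yp e as bs ms j)\<bar>
         + (dist (e (cseq ?\<sigma> ms i)) (xp e as bs ms i) + dist (e (dseq ?\<sigma> ms i)) (yp e as bs ms i))
         + (dist (e (cseq ?\<sigma> ms j)) (xp e as bs ms j) + dist (e (dseq ?\<sigma> ms j)) (yp e as bs ms j))"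
      by (rule dist_approx)
    moreover have "\<bar>dist (xp e as bs ms i) (xp e as bs ms j) - dist (yp e as bs ms i) (yp e as bs ms j)\<bar> = 0" using D2[OF ij] by simp
    ultimately show "\<bar>dist (e (cseq ?\<sigma> ms i)) (e (cseq ?\<sigma> ms j)) - dist (e (dseq ?\<sigma> ms i)) (e (dseq ?\<sigma> ms j))\<bar>
       < real_of_rat (f i) + real_of_rat (f j)"
        using A[OF ij(1)] A[OF ij(2)] by linarith
  qed
qed

theorem fact4p3:
  fixes e :: "nat \<Rightarrow> 'c::complete_space" and as bs :: "'c list"
  assumes "inj e"
    and "\<forall>x. \<forall>\<epsilon>>0. \<exists>n. dist (e n) x < \<epsilon>"
    and "length as = length bs"
  shows "(\<forall>(\<alpha>::'o::wellorder) f. f \<in> REC \<longrightarrow> bf \<alpha> as bs \<longrightarrow> simf e f \<alpha> as bs)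
         \<and> le_inf (SRank as bs :: 'o option) (RRank e as bs)"
proof
  show p1: "\<forall>(\<alpha>::'o::wellorder) f. f \<in> REC \<longrightarrow> bf \<alpha> as bs \<longrightarrow> simf e f \<alpha> as bs"
    using part1[OF assms(2,3)] by blast
  show "le_inf (SRank as bs :: 'o option) (RRank e as bs)"
  proof (cases "\<exists>\<mu>::'o. \<exists>f\<in>REC. \<not> simf e f \<mu> as bs")
    case False
    then show ?thesis unfolding RRank_def le_inf_def by simp
  next
    case True
    define m where "m = (LEAST \<mu>::'o. \<exists>f\<in>REC. \<not> simf e f \<mu> as bs)"
    have "\<exists>f\<in>REC. \<not> simf e f m as bs" unfolding m_def using True by (rule LeastI_ex)
    then have nb: "\<not> bf m as bs" using p1 by blast
    then have ex: "\<exists>\<mu>::'o. \<not> bf \<mu> as bs" by blast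
    have "(LEAST \<mu>::'o. \<not> bf \<mu> as bs) \<le> m" using nb by (rule Least_le)
    then show ?thesis unfolding RRank_def SRank_def le_inf_def using True ex m_def by simp
  qed
qed

end
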